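(* Let $T$ be a minimal homeomorphism of a compact metric space $(X,\delta)$, let $G$ be a locally compact second countable group and let $f\colon X\to G$ be continuous. Then for every $x\in X$ and every integer $n$, \[E_{T^n x}(f)=f(n,x)\cdot E_x(f)\cdot f(n,x)^{-1}.\]
   Context: The cocycle is defined by $f(n,x)=f(T^{n-1}x)\cdots f(Tx)f(x)$ for $n\ge1$, $f(0,x)=\mathbf{1}_G$, and $f(n,x)=f(-n,T^nx)^{-1}$ for $n<0$. It satisfies $f(k,T^lx)f(l,x)=f(k+l,x)$. The essential range at $x\in X$, denoted $E_x(f)$, is the set of $g\in G$ such that for every open neighbourhood $U$ of $g$ and every open neighbourhood $\mathcal O$ of $x$ there is an integer $n\neq0$ with $T^{-n}\mathcal O\cap\mathcal O\cap\{y: f(n,y)\in U\}\neq\varnothing$. *)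

theory Defs
  imports "HOL-Analysis.Analysis"
begin

text \<open>Integer powers of an invertible map T on the whole type (the space X is
  the underlying type; the inverse is inv T).\<close>
definition Tpow :: "('a \<Rightarrow> 'a) \<Rightarrow> int \<Rightarrow> 'a \<Rightarrow> 'a" where
  "Tpow T n = (if n \<ge> 0 then T ^^ nat n else (inv T) ^^ nat (- n))"

definition minimal_map :: "('a::topological_space \<Rightarrow> 'a) \<Rightarrow> bool" where
  "minimal_map T \<longleftrightarrow> (\<forall>A. closed A \<and> T ` A = A \<longrightarrow> A = {} \<or> A = UNIV)"

text \<open>The group G is written additively (group_add need not be commutative).
  cocycle_nat f T n x = f(T^(n-1) x) + ... + f(T x) + f x.\<close>
fun cocycle_nat :: "('a \<Rightarrow> 'g::group_add) \<Rightarrow> ('a \<Rightarrow> 'a) \<Rightarrow> nat \<Rightarrow> 'a \<Rightarrow> 'g" where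
  "cocycle_nat f T 0 x = 0"
| "cocycle_nat f T (Suc n) x = f ((T ^^ n) x) + cocycle_nat f T n x"

definition cocycle :: "('a \<Rightarrow> 'g::group_add) \<Rightarrow> ('a \<Rightarrow> 'a) \<Rightarrow> int \<Rightarrow> 'a \<Rightarrow> 'g" where
  "cocycle f T n x = (if n \<ge> 0 then cocycle_nat f T (nat n) x
                      else - cocycle_nat f T (nat (- n)) (Tpow T n x))"

definition ess_range_at :: "('a::topological_space \<Rightarrow> 'g::{group_add,topological_space})
    \<Rightarrow> ('a \<Rightarrow> 'a) \<Rightarrow> 'a \<Rightarrow> 'g set" where
  "ess_range_at f T x = {g. \<forall>U V. open U \<and> g \<in> U \<and> open V \<and> x \<in> V \<longrightarrow>
      (\<exists>n::int. n \<noteq> 0 \<and> {y. Tpow T n y \<in> V} \<inter> V \<inter> {y. cocycle f T n y \<in> U} \<noteq> {})}"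

end

theory Submission
  imports Defs
begin

lemma funpow_inv_cancel:
  fixes T :: "'a \<Rightarrow> 'a"
  assumes "\<And>y. T (inv T y) = y"
  shows "(T ^^ q) ((inv T ^^ q) y) = y"
proof (induction q arbitrary: y)
  case 0 then show ?case by simp
next
  case (Suc q)
  have "(T ^^ Suc q) ((inv T ^^ Suc q) y) = (T ^^ q) (T (inv T ((inv T ^^ q) y)))"
    by (simp only: funpow_Suc_right[of q T] funpow.simps(2)[of q "inv T"] o_apply)
  also have "\<dots> = y" using assms Suc by simp
  finally show ?case .
qed

lemma Tpow_succ:
  fixes T :: "'a \<Rightarrow> 'a"
  assumes li: "\<And>x. inv T (T x) = x"
  shows "Tpow T (n + 1) y = Tpow T n (T y)"
proof (cases "n \<ge> 0")
  case True
  then have "nat (n+1) = Suc (nat n)" by simp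
  then show ?thesis using True by (simp add: Tpow_def funpow_Suc_right del: funpow.simps)
next
  case False
  show ?thesis
  proof (cases "n = -1")
    case True then show ?thesis by (simp add: Tpow_def li)
  next
    case False
    with \<open>\<not> n \<ge> 0\<close> have "n + 1 < 0" by simp
    then obtain q where q: "nat (-(n+1)) = q" "nat (-n) = Suc q" by (intro that) auto
    have "(inv T ^^ Suc q) (T y) = (inv T ^^ q) y"
      by (simp add: funpow_Suc_right li del: funpow.simps)
    then show ?thesis using \<open>n + 1 < 0\<close> q by (simp add: Tpow_def)
  qed
qed

lemma Tpow_pred:
  fixes T :: "'a \<Rightarrow> 'a"
  assumes li: "\<And>x. inv T (T x) = x" and ri: "\<And>y. T (inv T y) = y"
  shows "Tpow T (n - 1) y = Tpow T n (inv T y)"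
  using Tpow_succ[of T "n-1" "inv T y", OF li] ri by simp

lemma Tpow_add:
  fixes T :: "'a \<Rightarrow> 'a"
  assumes li: "\<And>x. inv T (T x) = x" and ri: "\<And>y. T (inv T y) = y"
  shows "Tpow T (a + b) y = Tpow T a (Tpow T b y)"
proof (induction b arbitrary: y rule: int_induct[where k=0])
  case base then show ?case by (simp add: Tpow_def)
next
  case (step1 i)
  have "Tpow T (a + (i+1)) y = Tpow T ((a + i) + 1) y" by (simp only: add.assoc)
  also have "\<dots> = Tpow T (a+i) (T y)" by (rule Tpow_succ[OF li])
  also have "\<dots> = Tpow T a (Tpow T i (T y))" by (rule step1)
  also have "\<dots> = Tpow T a (Tpow T (i+1) y)" by (simp only: Tpow_succ[OF li])
  finally show ?case .
next
  case (step2 i)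
  have "Tpow T (a + (i-1)) y = Tpow T ((a + i) - 1) y" by (simp only: add_diff_eq)
  also have "\<dots> = Tpow T (a+i) (inv T y)" by (rule Tpow_pred[OF li ri])
  also have "\<dots> = Tpow T a (Tpow T i (inv T y))" by (rule step2)
  also have "\<dots> = Tpow T a (Tpow T (i-1) y)" by (simp only: Tpow_pred[OF li ri])
  finally show ?case .
qed

lemma cocycle_nat_add:
  "cocycle_nat f T (a + b) y = cocycle_nat f T a ((T ^^ b) y) + cocycle_nat f T b y"
  by (induction a) (auto simp: funpow_add add.assoc)

lemma cocycle_succ:
  fixes T :: "'a \<Rightarrow> 'a"
  assumes li: "\<And>x. inv T (T x) = x" and ri: "\<And>y. T (inv T y) = y"
  shows "cocycle f T (m + 1) y = cocycle f T m (T y) + f y"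
proof (cases "m \<ge> 0")
  case True
  then have "nat (m+1) = nat m + 1" by simp
  then show ?thesis using True cocycle_nat_add[of f T "nat m" 1 y]
    by (simp add: cocycle_def)
next
  case False
  show ?thesis
  proof (cases "m = -1")
    case True then show ?thesis by (simp add: cocycle_def Tpow_def li)
  next
    case False
    with \<open>\<not> m \<ge> 0\<close> have "m + 1 < 0" by simp
    then obtain q where q: "nat (-(m+1)) = q" "nat (-m) = Suc q" by (intro that) auto
    define z where "z = (inv T ^^ q) y"
    have tz: "(T ^^ q) z = y" unfolding z_def by (rule funpow_inv_cancel[OF ri])
    have "(inv T ^^ Suc q) (T y) = z"
      by (simp add: funpow_Suc_right li z_def del: funpow.simps)
    then have e1: "cocycle f T m (T y) = - (f y + cocycle_nat f T q z)"
      using \<open>m + 1 < 0\<close> q tz by (simp add: cocycle_def Tpow_def)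
    have e2: "cocycle f T (m+1) y = - cocycle_nat f T q z"
      using \<open>m + 1 < 0\<close> q by (simp add: cocycle_def Tpow_def z_def)
    show ?thesis using e1 e2 by (simp add: minus_add add.assoc)
  qed
qed

lemma cocycle_pred:
  fixes T :: "'a \<Rightarrow> 'a"
  assumes li: "\<And>x. inv T (T x) = x" and ri: "\<And>y. T (inv T y) = y"
  shows "cocycle f T (m - 1) y = cocycle f T m (inv T y) - f (inv T y)"
  using cocycle_succ[OF li ri, of f "m-1" "inv T y"] ri by (simp add: eq_diff_eq)

lemma cocycle_add:
  fixes T :: "'a \<Rightarrow> 'a"
  assumes li: "\<And>x. inv T (T x) = x" and ri: "\<And>y. T (inv T y) = y"
  shows "cocycle f T k (Tpow T l y) + cocycle f T l y = cocycle f T (k + l) y"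
proof (induction l arbitrary: y rule: int_induct[where k=0])
  case base then show ?case by (simp add: Tpow_def cocycle_def)
next
  case (step1 i)
  have "cocycle f T k (Tpow T (i+1) y) + cocycle f T (i+1) y
      = cocycle f T k (Tpow T i (T y)) + (cocycle f T i (T y) + f y)"
    by (simp only: Tpow_succ[OF li] cocycle_succ[OF li ri])
  also have "\<dots> = (cocycle f T k (Tpow T i (T y)) + cocycle f T i (T y)) + f y"
    by (simp only: add.assoc)
  also have "\<dots> = cocycle f T (k+i) (T y) + f y" by (simp only: step1)
  also have "\<dots> = cocycle f T (k+i+1) y" by (simp only: cocycle_succ[OF li ri])
  also have "\<dots> = cocycle f T (k+(i+1)) y" by (simp only: add.assoc)
  finally show ?case .
next
  case (step2 i)
  have "cocycle f T k (Tpow T (i-1) y) + cocycle f T (i-1) y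
      = cocycle f T k (Tpow T i (inv T y)) + (cocycle f T i (inv T y) - f (inv T y))"
    by (simp only: Tpow_pred[OF li ri] cocycle_pred[OF li ri])
  also have "\<dots> = (cocycle f T k (Tpow T i (inv T y)) + cocycle f T i (inv T y)) - f (inv T y)"
    by (simp only: add_diff_eq)
  also have "\<dots> = cocycle f T (k+i) (inv T y) - f (inv T y)" by (simp only: step2)
  also have "\<dots> = cocycle f T (k+i-1) y" by (simp only: cocycle_pred[OF li ri])
  also have "\<dots> = cocycle f T (k+(i-1)) y" by (simp only: add_diff_eq)
  finally show ?case .
qed

lemma cont_funpow:
  fixes S :: "'a::topological_space \<Rightarrow> 'a"
  assumes "continuous_on UNIV S"
  shows "continuous_on UNIV (S ^^ k)"
proof (induction k)
  case 0 then show ?case by (simp add: id_def)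
next
  case (Suc k)
  have "continuous_on UNIV (S \<circ> (S ^^ k))"
    by (rule continuous_on_compose[OF Suc continuous_on_subset[OF assms subset_UNIV]])
  then show ?case by simp
qed

lemma cont_Tpow:
  fixes T :: "'a::topological_space \<Rightarrow> 'a"
  assumes "continuous_on UNIV T" "continuous_on UNIV (inv T)"
  shows "continuous_on UNIV (Tpow T n)"
  using cont_funpow[OF assms(1)] cont_funpow[OF assms(2)] by (simp add: Tpow_def)

lemma cont_cocycle_nat:
  fixes T :: "'a::topological_space \<Rightarrow> 'a"
    and f :: "'a \<Rightarrow> 'g::topological_group_add"
  assumes "continuous_on UNIV T" "continuous_on UNIV f"
  shows "continuous_on UNIV (cocycle_nat f T k)"
proof (induction k)
  case 0 then show ?case by simp
next
  case (Suc k)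
  have "continuous_on UNIV (f \<circ> (T ^^ k))"
    by (rule continuous_on_compose[OF cont_funpow[OF assms(1)] continuous_on_subset[OF assms(2) subset_UNIV]])
  then have "continuous_on UNIV (\<lambda>x. f ((T ^^ k) x) + cocycle_nat f T k x)"
    using Suc by (intro continuous_on_add) (auto simp: o_def)
  then show ?case by simp
qed

lemma cont_cocycle:
  fixes T :: "'a::topological_space \<Rightarrow> 'a"
    and f :: "'a \<Rightarrow> 'g::topological_group_add"
  assumes "continuous_on UNIV T" "continuous_on UNIV (inv T)" "continuous_on UNIV f"
  shows "continuous_on UNIV (cocycle f T n)"
proof (cases "n \<ge> 0")
  case True
  then show ?thesis using cont_cocycle_nat[OF assms(1,3)]
    by (simp add: cocycle_def)
next
  case False
  have "continuous_on UNIV (cocycle_nat f T (nat (-n)) \<circ> Tpow T n)"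
    by (rule continuous_on_compose[OF cont_Tpow[OF assms(1,2)]
        continuous_on_subset[OF cont_cocycle_nat[OF assms(1,3)] subset_UNIV]])
  then have "continuous_on UNIV (\<lambda>x. - cocycle_nat f T (nat (-n)) (Tpow T n x))"
    by (intro continuous_on_minus) (simp add: o_def)
  then show ?thesis using False by (simp add: cocycle_def)
qed

lemma conj_split:
  fixes U :: "'g::topological_group_add set"
  assumes "open U" "c + g - c \<in> U"
  obtains A B where "open A" "open B" "c \<in> A" "g \<in> B"
    "\<And>a b a'. a \<in> A \<Longrightarrow> b \<in> B \<Longrightarrow> a' \<in> A \<Longrightarrow> a + b - a' \<in> U"
proof -
  define h where "h = (\<lambda>p::'g \<times> ('g \<times> 'g). fst p + fst (snd p) - snd (snd p))"
  have ch: "continuous_on UNIV h" unfolding h_def by (intro continuous_intros)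
  have oh: "open (h -` U)" by (rule open_vimage[OF assms(1) ch])
  have ph: "(c, (g, c)) \<in> h -` U" using assms(2) by (simp add: h_def)
  obtain A1 S where A1: "open A1" "open S" "(c, (g, c)) \<in> A1 \<times> S" "A1 \<times> S \<subseteq> h -` U"
    using open_prod_elim[OF oh ph] by blast
  have gcS: "(g, c) \<in> S" using A1(3) by simp
  obtain B A2 where B: "open B" "open A2" "(g, c) \<in> B \<times> A2" "B \<times> A2 \<subseteq> S"
    using open_prod_elim[OF A1(2) gcS] by blast
  show ?thesis
  proof (rule that[of "A1 \<inter> A2" B])
    show "open (A1 \<inter> A2)" using A1(1) B(2) by (rule open_Int)
    show "open B" by (rule B(1))
    show "c \<in> A1 \<inter> A2" using A1(3) B(3) by simp
    show "g \<in> B" using B(3) by simp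
    fix a b a' assume a: "a \<in> A1 \<inter> A2" and b: "b \<in> B" and a': "a' \<in> A1 \<inter> A2"
    have "(b, a') \<in> S" using b a' B(4) by blast
    then have "(a, (b, a')) \<in> A1 \<times> S" using a by simp
    then have "(a, (b, a')) \<in> h -` U" using A1(4) by blast
    then show "a + b - a' \<in> U" by (simp add: h_def)
  qed
qed

lemma ess_conj_sub:
  fixes T :: "'a::topological_space \<Rightarrow> 'a"
    and f :: "'a \<Rightarrow> 'g::{topological_group_add}"
  assumes li: "\<And>x. inv T (T x) = x" and ri: "\<And>y. T (inv T y) = y"
    and cT: "continuous_on UNIV T" and cI: "continuous_on UNIV (inv T)"
    and cf: "continuous_on UNIV f"
    and g: "g \<in> ess_range_at f T x"
  shows "cocycle f T n x + g - cocycle f T n x \<in> ess_range_at f T (Tpow T n x)"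
  unfolding ess_range_at_def
proof (intro CollectI allI impI)
  fix U V assume UV: "open U \<and> cocycle f T n x + g - cocycle f T n x \<in> U \<and> open V \<and> Tpow T n x \<in> V"
  define c where "c = cocycle f T n x"
  have oU: "open U" and hU: "c + g - c \<in> U" and oV: "open V" and xV: "Tpow T n x \<in> V"
    using UV c_def by auto
  obtain A B where AB: "open A" "open B" "c \<in> A" "g \<in> B"
    "\<And>a b a'. a \<in> A \<Longrightarrow> b \<in> B \<Longrightarrow> a' \<in> A \<Longrightarrow> a + b - a' \<in> U"
    using conj_split[OF oU hU] by metis
  define W where "W = Tpow T n -` V \<inter> cocycle f T n -` A"
  have o1: "open (Tpow T n -` V)"
    by (rule open_vimage[OF oV cont_Tpow[OF cT cI]])
  have o2: "open (cocycle f T n -` A)"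
    by (rule open_vimage[OF AB(1) cont_cocycle[OF cT cI cf]])
  have oW: "open W" unfolding W_def using o1 o2 by (rule open_Int)
  have xW: "x \<in> W" using xV AB(3) c_def W_def by simp
  have gx: "\<forall>U V. open U \<and> g \<in> U \<and> open V \<and> x \<in> V \<longrightarrow>
      (\<exists>n::int. n \<noteq> 0 \<and> {y. Tpow T n y \<in> V} \<inter> V \<inter> {y. cocycle f T n y \<in> U} \<noteq> {})"
    using g unfolding ess_range_at_def by simp
  have "open B \<and> g \<in> B \<and> open W \<and> x \<in> W" using AB oW xW by simp
  then obtain m where m: "m \<noteq> 0" "{y. Tpow T m y \<in> W} \<inter> W \<inter> {y. cocycle f T m y \<in> B} \<noteq> {}"
    using gx[rule_format, of B W] by blast
  then obtain y where y: "Tpow T m y \<in> W" "y \<in> W" "cocycle f T m y \<in> B" by blast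
  define z where "z = Tpow T n y"
  have "z \<in> V" using y W_def z_def by simp
  moreover have "Tpow T m z \<in> V"
  proof -
    have "Tpow T m z = Tpow T (m + n) y" using Tpow_add[OF li ri, of m n y] z_def by simp
    also have "\<dots> = Tpow T n (Tpow T m y)" using Tpow_add[OF li ri, of n m y] by (simp add: add.commute)
    finally show ?thesis using y W_def by simp
  qed
  moreover have "cocycle f T m z \<in> U"
  proof -
    have e1: "cocycle f T m z + cocycle f T n y = cocycle f T (m + n) y"
      using cocycle_add[OF li ri, of f m n y] z_def by simp
    have e2: "cocycle f T n (Tpow T m y) + cocycle f T m y = cocycle f T (m + n) y"
      using cocycle_add[OF li ri, of f n m y] by (simp add: add.commute)
    have "cocycle f T m z = cocycle f T (m + n) y - cocycle f T n y"
      using e1 by (simp add: eq_diff_eq)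
    also have "\<dots> = cocycle f T n (Tpow T m y) + cocycle f T m y - cocycle f T n y"
      using e2 by simp
    finally have ez: "cocycle f T m z = cocycle f T n (Tpow T m y) + cocycle f T m y - cocycle f T n y" .
    have a1: "cocycle f T n (Tpow T m y) \<in> A" and a2: "cocycle f T n y \<in> A"
      using y W_def by auto
    show ?thesis unfolding ez by (rule AB(5)[OF a1 y(3) a2])
  qed
  ultimately have "{y. Tpow T m y \<in> V} \<inter> V \<inter> {y. cocycle f T m y \<in> U} \<noteq> {}" by blast
  then show "\<exists>m::int. m \<noteq> 0 \<and> {y. Tpow T m y \<in> V} \<inter> V \<inter> {y. cocycle f T m y \<in> U} \<noteq> {}"
    using m by blast
qed

theorem lemma1p1:
  fixes T :: "'a::metric_space \<Rightarrow> 'a"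
    and f :: "'a \<Rightarrow> 'g::{topological_group_add, second_countable_topology}"
  assumes "compact (UNIV :: 'a set)"
    and "homeomorphism UNIV UNIV T (inv T)"
    and "minimal_map T"
    and "locally_compact_space (euclidean :: 'g topology)"
    and "continuous_on UNIV f"
  shows "ess_range_at f T (Tpow T n x) =
         (\<lambda>g. cocycle f T n x + g - cocycle f T n x) ` ess_range_at f T x"
proof -
  have li: "\<And>x. inv T (T x) = x" and ri: "\<And>y. T (inv T y) = y"
    and cT: "continuous_on UNIV T" and cI: "continuous_on UNIV (inv T)"
    using assms(2) unfolding homeomorphism_def by auto
  note L = ess_conj_sub[OF li ri cT cI assms(5)]
  define c where "c = cocycle f T n x"
  show ?thesis
  proof
    show "(\<lambda>g. cocycle f T n x + g - cocycle f T n x) ` ess_range_at f T x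
          \<subseteq> ess_range_at f T (Tpow T n x)"
    proof
      fix h assume "h \<in> (\<lambda>g. cocycle f T n x + g - cocycle f T n x) ` ess_range_at f T x"
      then obtain g where gg: "g \<in> ess_range_at f T x" and hg: "h = cocycle f T n x + g - cocycle f T n x"
        by (rule imageE) simp
      show "h \<in> ess_range_at f T (Tpow T n x)" unfolding hg by (rule L[OF gg, where n=n])
    qed
  next
    show "ess_range_at f T (Tpow T n x)
          \<subseteq> (\<lambda>g. cocycle f T n x + g - cocycle f T n x) ` ess_range_at f T x"
    proof
      fix h assume h: "h \<in> ess_range_at f T (Tpow T n x)"
      have t0: "Tpow T 0 x = x" by (simp add: Tpow_def)
      have tx: "Tpow T (-n) (Tpow T n x) = x"
        using Tpow_add[OF li ri, of "-n" n x] t0 by simp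
      have c0: "cocycle f T 0 x = 0" by (simp add: cocycle_def)
      have "cocycle f T (-n) (Tpow T n x) + c = 0"
        using cocycle_add[OF li ri, of f "-n" n x] c0 c_def by simp
      then have cc: "cocycle f T (-n) (Tpow T n x) = - c"
        by (simp add: eq_neg_iff_add_eq_0)
      have "cocycle f T (-n) (Tpow T n x) + h - cocycle f T (-n) (Tpow T n x)
            \<in> ess_range_at f T x"
        using L[OF h, where n="-n"] tx by simp
      then have g: "- c + h + c \<in> ess_range_at f T x" using cc by simp
      have "h = c + (- c + h + c) - c" by (simp add: add.assoc)
      then show "h \<in> (\<lambda>g. cocycle f T n x + g - cocycle f T n x) ` ess_range_at f T x"
        using g c_def by blast
    qed
  qed
qed

end
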